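(* There exists an absolute constant $C$ such that for every integer $k\geq 1$, every $k$-nearest-neighbour graph of a finite point set in $\mathbb{R}^2$, drawn with straight-line edges, has every edge involved in at most $Ck^2$ crossings; in particular every $k$-nearest-neighbour graph is $Ck^2$-planar.
   Context: For a finite set $P\subset\mathbb{R}^2$ and $v\in P$, let $N_k(v)$ be the set of $k$ points of $P\setminus\{v\}$ closest to $v$ in Euclidean distance. The $k$-nearest-neighbour graph of $P$ is the geometric graph with vertex set $P$ in which $vw$ is an edge iff $w\in N_k(v)$ or $v\in N_k(w)$, edges being the straight-line segments between their endpoints. A graph is $m$-planar if it has a drawing in the plane in which each edge is involved in at most $m$ crossings. *)

theory Defs
  imports "HOL-Analysis.Analysis"
begin

type_synonym point = "real ^ 2"

text \<open>Ties are allowed and resolved arbitrarily by N.\<close>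
definition knn_choice :: "nat \<Rightarrow> point set \<Rightarrow> (point \<Rightarrow> point set) \<Rightarrow> bool" where
  "knn_choice k P N \<longleftrightarrow>
     (\<forall>v\<in>P. N v \<subseteq> P - {v} \<and> card (N v) = min k (card P - 1) \<and>
        (\<forall>w\<in>N v. \<forall>u\<in>P - {v} - N v. dist v w \<le> dist v u))"

definition knn_edges :: "point set \<Rightarrow> (point \<Rightarrow> point set) \<Rightarrow> point set set" where
  "knn_edges P N = {{v, w} | v w. v \<in> P \<and> w \<in> P \<and> (w \<in> N v \<or> v \<in> N w)}"

definition edges_cross :: "point set \<Rightarrow> point set \<Rightarrow> bool" where
  "edges_cross e f \<longleftrightarrow> e \<inter> f = {} \<and>
     (\<exists>a b c d. e = {a, b} \<and> f = {c, d} \<and> closed_segment a b \<inter> closed_segment c d \<noteq> {})"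

end

theory Submission
  imports Defs
begin

lemma inner2: "inner (u::point) u' = u$1*u'$1 + u$2*u'$2"
  by (simp add: inner_vec_def sum_2)

lemma normsq2: "(norm (u::point))^2 = u$1^2 + u$2^2"
  unfolding power2_norm_eq_inner inner2 by (simp add: power2_eq_square)

definition cls :: "point \<Rightarrow> point \<Rightarrow> int \<times> int" where
  "cls q x = (\<lfloor>2 * (x - q)$1 / norm (x - q)\<rfloor>, \<lfloor>2 * (x - q)$2 / norm (x - q)\<rfloor>)"

lemma unit_close:
  fixes a b :: point
  assumes na: "norm a = 1" and nb: "norm b = 1"
    and f1: "\<lfloor>2 * a$1\<rfloor> = \<lfloor>2 * b$1\<rfloor>" and f2: "\<lfloor>2 * a$2\<rfloor> = \<lfloor>2 * b$2\<rfloor>"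
  shows "inner a b > 3/4"
proof -
  have d1: "\<bar>a$1 - b$1\<bar> < 1/2" using f1 by linarith
  have d2: "\<bar>a$2 - b$2\<bar> < 1/2" using f2 by linarith
  have "(a$1 - b$1)^2 < (1/2)^2"
    using power_strict_mono[OF d1, of 2] by (simp only: power2_abs)
  moreover have "(a$2 - b$2)^2 < (1/2)^2"
    using power_strict_mono[OF d2, of 2] by (simp only: power2_abs)
  moreover have "a$1^2 + a$2^2 = 1" using na normsq2[of a] by simp
  moreover have "b$1^2 + b$2^2 = 1" using nb normsq2[of b] by simp
  ultimately show ?thesis unfolding inner2 by (simp add: power2_eq_square algebra_simps)
qed

lemma dir_close:
  fixes u u' :: point
  assumes u: "u \<noteq> 0" and u': "u' \<noteq> 0"
    and f1: "\<lfloor>2 * u$1 / norm u\<rfloor> = \<lfloor>2 * u'$1 / norm u'\<rfloor>"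
    and f2: "\<lfloor>2 * u$2 / norm u\<rfloor> = \<lfloor>2 * u'$2 / norm u'\<rfloor>"
  shows "inner u u' > 3/4 * norm u * norm u'"
proof -
  define a where "a = u /\<^sub>R norm u"
  define b where "b = u' /\<^sub>R norm u'"
  have na: "norm a = 1" using u by (simp add: a_def)
  have nb: "norm b = 1" using u' by (simp add: b_def)
  have ai: "a$i = u$i / norm u" "b$i = u'$i / norm u'" for i
    by (simp_all add: a_def b_def divide_inverse mult.commute)
  have "\<lfloor>2 * a$1\<rfloor> = \<lfloor>2 * b$1\<rfloor>" using f1 by (simp add: ai)
  moreover have "\<lfloor>2 * a$2\<rfloor> = \<lfloor>2 * b$2\<rfloor>" using f2 by (simp add: ai)
  ultimately have "inner a b > 3/4" using unit_close na nb by blast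
  moreover have "inner u u' = norm u * norm u' * inner a b"
    using u u' by (simp add: a_def b_def field_simps)
  moreover have "norm u * norm u' > 0" using u u' by simp
  ultimately have "norm u * norm u' * (3/4) < inner u u'"
    using mult_strict_left_mono[of "3/4" "inner a b" "norm u * norm u'"] by simp
  then show ?thesis by (simp add: mult_ac)
qed

lemma strict_close:
  fixes q x x' :: point
  assumes "x \<noteq> q" "x' \<noteq> q" "cls q x = cls q x'" "dist x' q \<le> dist x q"
  shows "dist x x' < dist x q"
proof -
  define u where "u = x - q"
  define u' where "u' = x' - q"
  have u: "u \<noteq> 0" "u' \<noteq> 0" using assms by (auto simp: u_def u'_def)
  have i: "inner u u' > 3/4 * norm u * norm u'"
    using dir_close[OF u] assms(3) by (simp add: cls_def u_def u'_def)
  have le: "norm u' \<le> norm u" using assms(4) by (simp add: u_def u'_def dist_norm)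
  have pos: "norm u' > 0" using u by simp
  have "(norm (u - u'))^2 = (norm u)^2 + (norm u')^2 - 2 * inner u u'"
    by (simp add: power2_norm_eq_inner inner_diff_left inner_diff_right inner_commute)
  also have "\<dots> < (norm u)^2 + (norm u')^2 - 3/2 * norm u * norm u'" using i by simp
  also have "\<dots> \<le> (norm u)^2"
  proof -
    have "norm u' * norm u' \<le> norm u * norm u'" using le pos by (simp add: mult_right_mono)
    moreover have "0 \<le> norm u * norm u'" by simp
    ultimately show ?thesis unfolding power2_eq_square by linarith
  qed
  finally have "(norm (u - u'))^2 < (norm u)^2" .
  then have "norm (u - u') < norm u" using power_less_imp_less_base by fastforce
  moreover have "u - u' = x - x'" by (simp add: u_def u'_def algebra_simps)
  ultimately have "norm (x - x') < norm u" by simp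
  moreover have "dist x q = norm u" by (simp add: dist_norm u_def)
  ultimately show ?thesis by (simp add: dist_norm)
qed

lemma knn_N_sub: "knn_choice k P N \<Longrightarrow> x \<in> P \<Longrightarrow> N x \<subseteq> P - {x}"
  by (simp add: knn_choice_def)

lemma knn_N_card: "knn_choice k P N \<Longrightarrow> x \<in> P \<Longrightarrow> card (N x) \<le> k"
  by (simp add: knn_choice_def)

lemma ball_in_N:
  assumes "knn_choice k P N" "x \<in> P" "y \<in> N x" "x' \<in> P" "x' \<noteq> x" "dist x x' < dist x y"
  shows "x' \<in> N x \<and> x' \<noteq> y"
proof -
  have "\<forall>u\<in>P - {x} - N x. dist x y \<le> dist x u" using assms(1-3) unfolding knn_choice_def by blast
  then have "x' \<in> N x" using assms(4-6) by force
  moreover have "x' \<noteq> y" using assms(6) by auto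
  ultimately show ?thesis by blast
qed

lemma floor_range:
  fixes t n :: real
  assumes "\<bar>t\<bar> \<le> n" "n > 0"
  shows "\<lfloor>2 * t / n\<rfloor> \<in> {-2..2}"
proof -
  have "-n \<le> t" "t \<le> n" using assms(1) by linarith+
  then have "-2 * n \<le> 2 * t" "2 * t \<le> 2 * n" by linarith+
  then have h1: "-2 \<le> 2 * t / n" and h2: "2 * t / n \<le> 2"
    using assms(2) by (simp_all add: divide_simps)
  have "\<lfloor>-2::real\<rfloor> \<le> \<lfloor>2 * t / n\<rfloor>" by (rule floor_mono[OF h1])
  moreover have "\<lfloor>2 * t / n\<rfloor> \<le> \<lfloor>2::real\<rfloor>" by (rule floor_mono[OF h2])
  ultimately show ?thesis by simp
qed

lemma cls_range:
  assumes "x \<noteq> q"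
  shows "cls q x \<in> {-2..2} \<times> {-2..2}"
proof -
  have n: "norm (x-q) > 0" using assms by simp
  have a: "\<lfloor>2 * (x-q)$1 / norm (x-q)\<rfloor> \<in> {-2..2}" by (rule floor_range[OF component_le_norm_cart n])
  have b: "\<lfloor>2 * (x-q)$2 / norm (x-q)\<rfloor> \<in> {-2..2}" by (rule floor_range[OF component_le_norm_cart n])
  show ?thesis unfolding cls_def using a b by (intro SigmaI)
qed

definition Sq :: "point set \<Rightarrow> (point \<Rightarrow> point set) \<Rightarrow> point \<Rightarrow> point set" where
  "Sq P N q = {x\<in>P. x \<noteq> q \<and> (\<exists>y\<in>N x. dist x q \<le> dist x y)}"

lemma class_card:
  assumes kc: "knn_choice k P N" and fin: "finite P"
  shows "card {x \<in> Sq P N q. cls q x = c} \<le> k"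
proof (cases "{x \<in> Sq P N q. cls q x = c} = {}")
  case True
  show ?thesis by (simp only: True card.empty)
next
  case False
  define C where "C = {x \<in> Sq P N q. cls q x = c}"
  have finC: "finite C" using fin by (simp add: C_def Sq_def)
  have ne: "C \<noteq> {}" using False by (simp add: C_def)
  define m where "m = Max ((\<lambda>x. dist x q) ` C)"
  have "m \<in> (\<lambda>x. dist x q) ` C" unfolding m_def using finC ne by (intro Max_in) auto
  then obtain x where xC: "x \<in> C" and xm: "dist x q = m" by auto
  have mx: "dist x' q \<le> dist x q" if "x' \<in> C" for x'
    unfolding xm m_def using finC that by (intro Max_ge) auto
  from xC have xP: "x \<in> P" and xq: "x \<noteq> q" and xc: "cls q x = c"
    by (auto simp: C_def Sq_def)
  from xC obtain y where yN: "y \<in> N x" and dy: "dist x q \<le> dist x y"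
    by (auto simp: C_def Sq_def)
  have sub: "C - {x} \<subseteq> N x - {y}"
  proof
    fix x' assume x': "x' \<in> C - {x}"
    then have x'P: "x' \<in> P" and x'q: "x' \<noteq> q" and x'c: "cls q x' = c" and nx: "x' \<noteq> x"
      by (auto simp: C_def Sq_def)
    have "dist x x' < dist x q"
      using strict_close[OF xq x'q] xc x'c mx x' by auto
    then have "dist x x' < dist x y" using dy by linarith
    then show "x' \<in> N x - {y}" using ball_in_N[OF kc xP yN x'P nx] by auto
  qed
  have finN: "finite (N x)" using knn_N_sub[OF kc xP] fin finite_subset by blast
  have "card (C - {x}) \<le> card (N x - {y})" using sub finN by (intro card_mono) auto
  also have "\<dots> = card (N x) - 1" using yN finN by simp
  finally have "card C - 1 \<le> card (N x) - 1" using xC finC by simp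
  moreover have "card (N x) \<le> k" using knn_N_card[OF kc xP] .
  moreover have "card (N x) \<ge> 1" using yN finN by (metis One_nat_def Suc_leI card_gt_0_iff empty_iff)
  moreover have "card C \<ge> 1" using xC finC by (metis One_nat_def Suc_leI card_gt_0_iff empty_iff)
  ultimately show ?thesis unfolding C_def[symmetric] by linarith
qed

lemma cone:
  assumes kc: "knn_choice k P N" and fin: "finite P"
  shows "card (Sq P N q) \<le> 25 * k"
proof -
  let ?I = "cls q ` Sq P N q"
  have I: "?I \<subseteq> {-2..2} \<times> {-2..2}" by (intro image_subsetI cls_range) (simp add: Sq_def)
  have finI: "finite ?I" using fin by (simp add: Sq_def)
  have cI: "card ?I \<le> 25"
  proof -
    have "card ?I \<le> card ({-2..2::int} \<times> {-2..2::int})" using I by (intro card_mono) auto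
    also have "\<dots> = 25" by (simp add: card_cartesian_product)
    finally show ?thesis .
  qed
  have "Sq P N q = (\<Union>c\<in>?I. {x \<in> Sq P N q. cls q x = c})" by auto
  then have "card (Sq P N q) \<le> (\<Sum>c\<in>?I. card {x \<in> Sq P N q. cls q x = c})"
    using card_UN_le[OF finI, of "\<lambda>c. {x \<in> Sq P N q. cls q x = c}"] by simp
  also have "\<dots> \<le> (\<Sum>c\<in>?I. k)" by (intro sum_mono class_card[OF kc fin])
  also have "\<dots> = card ?I * k" by simp
  also have "\<dots> \<le> 25 * k" using cI by simp
  finally show ?thesis .
qed

lemma edges_finite: "finite P \<Longrightarrow> finite (knn_edges P N)"
  by (rule finite_subset[of _ "Pow P"]) (auto simp: knn_edges_def)

lemma degree:
  assumes kc: "knn_choice k P N" and fin: "finite P" and zP: "z \<in> P"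
  shows "card {f \<in> knn_edges P N. z \<in> f} \<le> 26 * k"
proof -
  have sub: "{f \<in> knn_edges P N. z \<in> f} \<subseteq> (\<lambda>u. {z,u}) ` (N z \<union> Sq P N z)"
  proof
    fix f assume "f \<in> {f \<in> knn_edges P N. z \<in> f}"
    then obtain a b where f: "f = {a,b}" "a \<in> P" "b \<in> P" "b \<in> N a \<or> a \<in> N b" and zf: "z \<in> f"
      by (auto simp: knn_edges_def)
    have nb: "a \<in> N b \<Longrightarrow> a \<noteq> b" using knn_N_sub[OF kc f(3)] by blast
    have na: "b \<in> N a \<Longrightarrow> a \<noteq> b" using knn_N_sub[OF kc f(2)] by blast
    have inS: "u \<in> Sq P N t" if "u \<in> P" "t \<in> N u" "t \<noteq> u" for u t
      unfolding Sq_def using that by blast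
    show "f \<in> (\<lambda>u. {z,u}) ` (N z \<union> Sq P N z)"
    proof (cases "z = a")
      case True
      have "b \<in> N z \<union> Sq P N z"
      proof (cases "b \<in> N a")
        case True
        then show ?thesis using \<open>z = a\<close> by blast
      next
        case False
        then have "a \<in> N b" using f(4) by blast
        then show ?thesis using inS[OF f(3)] nb \<open>z = a\<close> by blast
      qed
      then show ?thesis using f(1) True by blast
    next
      case False
      then have zb: "z = b" using zf f(1) by blast
      have "a \<in> N z \<union> Sq P N z"
      proof (cases "a \<in> N b")
        case True
        then show ?thesis using zb by blast
      next
        case False
        then have "b \<in> N a" using f(4) by blast
        then show ?thesis using inS[OF f(2)] na zb by blast
      qed
      moreover have "f = {z, a}" using f(1) zb by blast
      ultimately show ?thesis by blast
    qed
  qed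
  have finN: "finite (N z)" using knn_N_sub[OF kc zP] fin finite_subset by blast
  have finS: "finite (Sq P N z)" using fin by (simp add: Sq_def)
  have "card {f \<in> knn_edges P N. z \<in> f} \<le> card ((\<lambda>u. {z,u}) ` (N z \<union> Sq P N z))"
    using sub finN finS by (intro card_mono) auto
  also have "\<dots> \<le> card (N z \<union> Sq P N z)" by (rule card_image_le) (use finN finS in auto)
  also have "\<dots> \<le> card (N z) + card (Sq P N z)" by (rule card_Un_le)
  also have "\<dots> \<le> k + 25 * k" using knn_N_card[OF kc zP] cone[OF kc fin, of z] by linarith
  finally show ?thesis by simp
qed

lemma seg_dist: "p \<in> closed_segment a (b::point) \<Longrightarrow> dist a b = dist a p + dist p b"
  using between_mem_segment between by blast

lemma directed:
  assumes kc: "knn_choice k P N"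
    and vP: "v \<in> P" and wv: "w \<in> N v" and xP: "x \<in> P" and yx: "y \<in> N x"
    and disj: "{v,w} \<inter> {x,y} = {}"
    and p1: "p \<in> closed_segment v w" and p2: "p \<in> closed_segment x y"
  shows "y \<in> N v \<or> x \<in> Sq P N w"
proof (cases "dist x w \<le> dist x y")
  case True
  then show ?thesis using xP disj yx by (auto simp: Sq_def)
next
  case False
  have "dist v w = dist v p + dist p w" using seg_dist[OF p1] .
  moreover have "dist x y = dist x p + dist p y" using seg_dist[OF p2] .
  moreover have "dist v y \<le> dist v p + dist p y" by (rule dist_triangle)
  moreover have "dist x w \<le> dist x p + dist p w" by (rule dist_triangle)
  ultimately have lt: "dist v y < dist v w" using False by linarith
  have yP: "y \<in> P" using knn_N_sub[OF kc xP] yx by auto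
  have "y \<noteq> v" using disj by auto
  then have "y \<in> N v" using ball_in_N[OF kc vP wv yP] lt by auto
  then show ?thesis by simp
qed

lemma main_dir:
  assumes kc: "knn_choice k P N" and fin: "finite P"
    and vP: "v \<in> P" and wP: "w \<in> P" and wv: "w \<in> N v"
  shows "card {f \<in> knn_edges P N. edges_cross {v,w} f} \<le> 51 * k^2"
proof -
  define A where "A = (\<Union>z\<in>N v. {f \<in> knn_edges P N. z \<in> f})"
  define B where "B = (\<Union>x\<in>Sq P N w. (\<lambda>y. {x,y}) ` N x)"
  have key: "{x,y} \<in> A \<union> B" if xP: "x \<in> P" and yx: "y \<in> N x" and E: "{x,y} \<in> knn_edges P N"
    and disj: "{v,w} \<inter> {x,y} = {}"
    and p1: "p \<in> closed_segment v w" and p2: "p \<in> closed_segment x y" for x y p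
  proof -
    from directed[OF kc vP wv xP yx disj p1 p2]
    show ?thesis
    proof
      assume "y \<in> N v" then show ?thesis using E by (auto simp: A_def)
    next
      assume "x \<in> Sq P N w" then show ?thesis using yx by (auto simp: B_def)
    qed
  qed
  have sub: "{f \<in> knn_edges P N. edges_cross {v,w} f} \<subseteq> A \<union> B"
  proof
    fix f assume fC: "f \<in> {f \<in> knn_edges P N. edges_cross {v,w} f}"
    then have fE: "f \<in> knn_edges P N" and cr: "edges_cross {v,w} f" by auto
    from cr obtain a b c d where disj: "{v,w} \<inter> f = {}" and ab: "{v,w} = {a,b}" and cd: "f = {c,d}"
      and m: "closed_segment a b \<inter> closed_segment c d \<noteq> {}"
      unfolding edges_cross_def by blast
    have s1: "closed_segment a b = closed_segment v w"
    proof -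
      have "(a = v \<and> b = w) \<or> (a = w \<and> b = v)" using ab by (simp add: doubleton_eq_iff) blast
      then show ?thesis using closed_segment_commute by blast
    qed
    from fE obtain x y where f: "f = {x,y}" "x \<in> P" "y \<in> P" "y \<in> N x \<or> x \<in> N y"
      by (auto simp: knn_edges_def)
    have s2: "closed_segment c d = closed_segment x y"
    proof -
      have "(c = x \<and> d = y) \<or> (c = y \<and> d = x)" using cd f(1) by (simp add: doubleton_eq_iff) blast
      then show ?thesis using closed_segment_commute by blast
    qed
    obtain p where p1: "p \<in> closed_segment v w" and p2: "p \<in> closed_segment x y"
      using m s1 s2 by auto
    show "f \<in> A \<union> B"
    proof (cases "y \<in> N x")
      case True
      have E1: "{x,y} \<in> knn_edges P N" using fE f(1) by simp
      have d1: "{v,w} \<inter> {x,y} = {}" using disj f(1) by simp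
      show ?thesis using key[OF f(2) True E1 d1 p1 p2] f(1) by simp
    next
      case False
      then have xy: "x \<in> N y" using f(4) by auto
      have fyx: "f = {y,x}" using f(1) by (simp add: insert_commute)
      have E1: "{y,x} \<in> knn_edges P N" using fE fyx by simp
      have d1: "{v,w} \<inter> {y,x} = {}" using disj fyx by simp
      have p2': "p \<in> closed_segment y x" using p2 by (simp add: closed_segment_commute)
      have "{y,x} \<in> A \<union> B" by (rule key[OF f(3) xy E1 d1 p1 p2'])
      then show ?thesis using fyx by simp
    qed
  qed
  have finN: "finite (N v)" using knn_N_sub[OF kc vP] fin finite_subset by blast
  have finS: "finite (Sq P N w)" using fin by (simp add: Sq_def)
  have finNx: "finite (N x)" if "x \<in> Sq P N w" for x
    using that knn_N_sub[OF kc, of x] fin finite_subset by (auto simp: Sq_def)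
  have finA: "finite A" unfolding A_def by (rule finite_subset[OF _ edges_finite[OF fin, of N]]) auto
  have finB: "finite B" unfolding B_def using finS finNx by auto
  have cA: "card A \<le> k * (26 * k)"
  proof -
    have "card A \<le> (\<Sum>z\<in>N v. card {f \<in> knn_edges P N. z \<in> f})"
      unfolding A_def by (rule card_UN_le[OF finN])
    also have "\<dots> \<le> (\<Sum>z\<in>N v. 26 * k)"
      by (intro sum_mono degree[OF kc fin]) (use knn_N_sub[OF kc vP] in auto)
    also have "\<dots> = card (N v) * (26 * k)" by simp
    also have "\<dots> \<le> k * (26 * k)" using knn_N_card[OF kc vP] by simp
    finally show ?thesis .
  qed
  have cB: "card B \<le> (25 * k) * k"
  proof -
    have "card B \<le> (\<Sum>x\<in>Sq P N w. card ((\<lambda>y. {x,y}) ` N x))"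
      unfolding B_def by (rule card_UN_le[OF finS])
    also have "\<dots> \<le> (\<Sum>x\<in>Sq P N w. k)"
    proof (intro sum_mono)
      fix x assume x: "x \<in> Sq P N w"
      have "card ((\<lambda>y. {x,y}) ` N x) \<le> card (N x)" by (rule card_image_le[OF finNx[OF x]])
      also have "\<dots> \<le> k" using knn_N_card[OF kc, of x] x by (simp add: Sq_def)
      finally show "card ((\<lambda>y. {x,y}) ` N x) \<le> k" .
    qed
    also have "\<dots> = card (Sq P N w) * k" by simp
    also have "\<dots> \<le> (25 * k) * k" using cone[OF kc fin, of w] by simp
    finally show ?thesis .
  qed
  have "card {f \<in> knn_edges P N. edges_cross {v,w} f} \<le> card (A \<union> B)"
    using sub finA finB by (intro card_mono) auto
  also have "\<dots> \<le> card A + card B" by (rule card_Un_le)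
  also have "\<dots> \<le> 51 * k^2" using cA cB by (simp add: power2_eq_square)
  finally show ?thesis .
qed

theorem lemma37:
  shows "\<exists>C::real. \<forall>k::nat. k \<ge> 1 \<longrightarrow>
    (\<forall>P N. finite P \<and> knn_choice k P N \<longrightarrow>
      (\<forall>e\<in>knn_edges P N.
         real (card {f \<in> knn_edges P N. edges_cross e f}) \<le> C * real k ^ 2))"
proof (intro exI[of _ 51] allI impI ballI)
  fix k :: nat and P N e
  assume "1 \<le> k" and PN: "finite P \<and> knn_choice k P N" and e: "e \<in> knn_edges P N"
  then have fin: "finite P" and kc: "knn_choice k P N" by auto
  from e obtain v w where ev: "e = {v,w}" "v \<in> P" "w \<in> P" "w \<in> N v \<or> v \<in> N w"
    by (auto simp: knn_edges_def)
  have "card {f \<in> knn_edges P N. edges_cross e f} \<le> 51 * k^2"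
  proof (cases "w \<in> N v")
    case True
    then show ?thesis using main_dir[OF kc fin ev(2,3) True] ev(1) by simp
  next
    case False
    then have "v \<in> N w" using ev(4) by auto
    moreover have "e = {w,v}" using ev(1) by (simp add: insert_commute)
    ultimately show ?thesis using main_dir[OF kc fin ev(3,2)] by simp
  qed
  then have "real (card {f \<in> knn_edges P N. edges_cross e f}) \<le> real (51 * k^2)"
    by (rule of_nat_mono)
  then show "real (card {f \<in> knn_edges P N. edges_cross e f}) \<le> 51 * real k ^ 2" by simp
qed

end
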